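(* A negatively associated, simple point process on $\mathbb{R}^d$ with Radon mean measure is weakly sub-Poisson. A (positively) associated point process on $\mathbb{R}^d$ with Radon, diffuse mean measure is weakly super-Poisson.
   Context: For a point process $\Phi$ with mean measure $\alpha(\cdot)=\mathbb{E}\Phi(\cdot)$ and $k$-th factorial moment measure $\alpha^{(k)}$ (for simple $\Phi$, $\alpha^{(k)}(B_1\times\dots\times B_k)=\mathbb{E}\prod_{i=1}^k\Phi(B_i)$ for pairwise disjoint bounded Borel $B_i$): $\Phi$ is $\nu$-weakly sub-Poisson if $\Pr\{\Phi(B)=0\}\le e^{-\alpha(B)}$ for all bounded Borel $B$; $\alpha$-weakly sub-Poisson if $\alpha^{(k)}(B_1\times\dots\times B_k)\le\prod_{i=1}^k\alpha(B_i)$ for all $k$ and all mutually disjoint bounded Borel $B_1,\dots,B_k$; weakly sub-Poisson if it is both. $\nu$-weakly super-Poisson, $\alpha$-weakly super-Poisson and weakly super-Poisson are defined with the reversed inequalities. $\Phi$ is (positively) associated if $\mathrm{Cov}(f(\Phi(B_1),\dots,\Phi(B_k)),g(\Phi(B_1),\dots,\Phi(B_k)))\ge 0$ for all bounded Borel $B_1,\dots,B_k$ and all continuous increasing $f,g$ with values in $[0,1]$. $\Phi$ is negatively associated if $\mathrm{Cov}(f(\Phi(B_1),\dots,\Phi(B_k)),g(\Phi(B_{k+1}),\dots,\Phi(B_l)))\le 0$ for all bounded Borel $B_1,\dots,B_l$ with $(B_1\cup\dots\cup B_k)\cap(B_{k+1}\cup\dots\cup B_l)=\emptyset$ and all increasing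 $f,g$. *)

theory Defs
  imports "HOL-Probability.Probability"
begin

text \<open>Point processes on R^d (d arbitrary, encoded by a Euclidean space type 'a).\<close>

definition bdd_borel :: "'a::euclidean_space set \<Rightarrow> bool" where
  "bdd_borel B \<longleftrightarrow> B \<in> sets borel \<and> bounded B"

definition point_process :: "'w measure \<Rightarrow> ('w \<Rightarrow> 'a::euclidean_space measure) \<Rightarrow> bool" where
  "point_process M Phi \<longleftrightarrow> prob_space M \<and>
     (\<forall>w\<in>space M. sets (Phi w) = sets borel \<and>
        (\<forall>B. bdd_borel B \<longrightarrow> emeasure (Phi w) B \<in> range of_nat)) \<and>
     (\<forall>B. bdd_borel B \<longrightarrow> (\<lambda>w. emeasure (Phi w) B) \<in> borel_measurable M)"

definition cnt :: "('w \<Rightarrow> 'a measure) \<Rightarrow> 'w \<Rightarrow> 'a set \<Rightarrow> real" where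
  "cnt Phi w B = enn2real (emeasure (Phi w) B)"

definition cnt_vec :: "('w \<Rightarrow> 'a measure) \<Rightarrow> 'w \<Rightarrow> nat \<Rightarrow> (nat \<Rightarrow> 'a set) \<Rightarrow> nat \<Rightarrow> real" where
  "cnt_vec Phi w k B = (\<lambda>i. if i < k then cnt Phi w (B i) else 0)"

definition mean_measure :: "'w measure \<Rightarrow> ('w \<Rightarrow> 'a measure) \<Rightarrow> 'a set \<Rightarrow> ennreal" where
  "mean_measure M Phi B = (\<integral>\<^sup>+ w. emeasure (Phi w) B \<partial>M)"

text \<open>k-th factorial moment measure evaluated on B_0 x ... x B_{k-1}, for pairwise disjoint
  bounded Borel B_i (where it equals E prod Phi(B_i)).\<close>
definition fact_moment :: "'w measure \<Rightarrow> ('w \<Rightarrow> 'a measure) \<Rightarrow> nat \<Rightarrow> (nat \<Rightarrow> 'a set) \<Rightarrow> ennreal" where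
  "fact_moment M Phi k B = (\<integral>\<^sup>+ w. (\<Prod>i<k. emeasure (Phi w) (B i)) \<partial>M)"

definition simple_pp :: "'w measure \<Rightarrow> ('w \<Rightarrow> 'a measure) \<Rightarrow> bool" where
  "simple_pp M Phi \<longleftrightarrow> (AE w in M. \<forall>x. emeasure (Phi w) {x} \<le> 1)"

definition radon_mean :: "'w measure \<Rightarrow> ('w \<Rightarrow> 'a::euclidean_space measure) \<Rightarrow> bool" where
  "radon_mean M Phi \<longleftrightarrow> (\<forall>B. bdd_borel B \<longrightarrow> mean_measure M Phi B < \<top>)"

definition diffuse_mean :: "'w measure \<Rightarrow> ('w \<Rightarrow> 'a measure) \<Rightarrow> bool" where
  "diffuse_mean M Phi \<longleftrightarrow> (\<forall>x. mean_measure M Phi {x} = 0)"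

definition cov :: "'w measure \<Rightarrow> ('w \<Rightarrow> real) \<Rightarrow> ('w \<Rightarrow> real) \<Rightarrow> real" where
  "cov M X Y = (\<integral>w. X w * Y w \<partial>M) - (\<integral>w. X w \<partial>M) * (\<integral>w. Y w \<partial>M)"

text \<open>f : R^k -> R, encoded as a function on nat => real depending only on coordinates < k.\<close>
definition depends_on :: "nat \<Rightarrow> ((nat \<Rightarrow> real) \<Rightarrow> real) \<Rightarrow> bool" where
  "depends_on k f \<longleftrightarrow> (\<forall>x y. (\<forall>i<k. x i = y i) \<longrightarrow> f x = f y)"

definition incr_on :: "nat \<Rightarrow> ((nat \<Rightarrow> real) \<Rightarrow> real) \<Rightarrow> bool" where
  "incr_on k f \<longleftrightarrow> (\<forall>x y. (\<forall>i<k. x i \<le> y i) \<longrightarrow> f x \<le> f y)"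

definition associated :: "'w measure \<Rightarrow> ('w \<Rightarrow> 'a::euclidean_space measure) \<Rightarrow> bool" where
  "associated M Phi \<longleftrightarrow>
    (\<forall>k B f g. (\<forall>i<k. bdd_borel (B i)) \<and>
       depends_on k f \<and> depends_on k g \<and> incr_on k f \<and> incr_on k g \<and>
       continuous_on UNIV f \<and> continuous_on UNIV g \<and>
       (\<forall>x. 0 \<le> f x \<and> f x \<le> 1) \<and> (\<forall>x. 0 \<le> g x \<and> g x \<le> 1) \<longrightarrow>
       cov M (\<lambda>w. f (cnt_vec Phi w k B)) (\<lambda>w. g (cnt_vec Phi w k B)) \<ge> 0)"

definition neg_associated :: "'w measure \<Rightarrow> ('w \<Rightarrow> 'a::euclidean_space measure) \<Rightarrow> bool" where
  "neg_associated M Phi \<longleftrightarrow>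
    (\<forall>k m B C f g. (\<forall>i<k. bdd_borel (B i)) \<and> (\<forall>j<m. bdd_borel (C j)) \<and>
       (\<Union>i<k. B i) \<inter> (\<Union>j<m. C j) = {} \<and>
       depends_on k f \<and> depends_on m g \<and> incr_on k f \<and> incr_on m g \<and>
       integrable M (\<lambda>w. f (cnt_vec Phi w k B)) \<and>
       integrable M (\<lambda>w. g (cnt_vec Phi w m C)) \<and>
       integrable M (\<lambda>w. f (cnt_vec Phi w k B) * g (cnt_vec Phi w m C)) \<longrightarrow>
       cov M (\<lambda>w. f (cnt_vec Phi w k B)) (\<lambda>w. g (cnt_vec Phi w m C)) \<le> 0)"

definition nu_weakly_sub :: "'w measure \<Rightarrow> ('w \<Rightarrow> 'a::euclidean_space measure) \<Rightarrow> bool" where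
  "nu_weakly_sub M Phi \<longleftrightarrow> (\<forall>B. bdd_borel B \<longrightarrow>
     measure M {w \<in> space M. emeasure (Phi w) B = 0} \<le> exp (- enn2real (mean_measure M Phi B)))"

definition nu_weakly_super :: "'w measure \<Rightarrow> ('w \<Rightarrow> 'a::euclidean_space measure) \<Rightarrow> bool" where
  "nu_weakly_super M Phi \<longleftrightarrow> (\<forall>B. bdd_borel B \<longrightarrow>
     measure M {w \<in> space M. emeasure (Phi w) B = 0} \<ge> exp (- enn2real (mean_measure M Phi B)))"

definition alpha_weakly_sub :: "'w measure \<Rightarrow> ('w \<Rightarrow> 'a::euclidean_space measure) \<Rightarrow> bool" where
  "alpha_weakly_sub M Phi \<longleftrightarrow> (\<forall>k B. (\<forall>i<k. bdd_borel (B i)) \<and> disjoint_family_on B {..<k} \<longrightarrow>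
     fact_moment M Phi k B \<le> (\<Prod>i<k. mean_measure M Phi (B i)))"

definition alpha_weakly_super :: "'w measure \<Rightarrow> ('w \<Rightarrow> 'a::euclidean_space measure) \<Rightarrow> bool" where
  "alpha_weakly_super M Phi \<longleftrightarrow> (\<forall>k B. (\<forall>i<k. bdd_borel (B i)) \<and> disjoint_family_on B {..<k} \<longrightarrow>
     fact_moment M Phi k B \<ge> (\<Prod>i<k. mean_measure M Phi (B i)))"

definition weakly_sub_poisson where
  "weakly_sub_poisson M Phi \<longleftrightarrow> nu_weakly_sub M Phi \<and> alpha_weakly_sub M Phi"

definition weakly_super_poisson where
  "weakly_super_poisson M Phi \<longleftrightarrow> nu_weakly_super M Phi \<and> alpha_weakly_super M Phi"

end

theory Submission
  imports Defs
begin


lemma partition_cover: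
  fixes B :: "'a::euclidean_space set"
  assumes bB: "bounded B" and B: "B \<in> sets borel"
    and U: "\<And>x. x \<in> closure B \<Longrightarrow> open (U x) \<and> x \<in> U x"
  shows "\<exists>(m::nat) c D. disjoint_family_on D {..<m} \<and> (\<Union>j<m. D j) = B \<and>
           (\<forall>j<m. D j \<in> sets borel \<and> D j \<subseteq> B \<inter> U (c j) \<and> c j \<in> closure B)"
proof -
  have "compact (closure B)" using bB by (simp add: compact_closure)
  then obtain K where K: "K \<subseteq> closure B" "finite K" "closure B \<subseteq> (\<Union>c\<in>K. U c)"
    using compactE_image[of "closure B" "closure B" U] U by blast
  obtain cs where cs: "set cs = K" using K(2) finite_list by blast
  define m where "m = length cs"
  define A where "A j = B \<inter> U (cs ! j)" for j
  define D where "D = disjointed A"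
  have dis: "disjoint_family_on D {..<m}"
    unfolding D_def by (rule disjoint_family_on_mono[OF subset_UNIV disjoint_family_disjointed])
  have "(\<Union>j<m. D j) = (\<Union>j\<in>{0..<m}. A j)"
    unfolding D_def by (simp only: lessThan_atLeast0 finite_UN_disjointed_eq)
  also have "\<dots> = B"
  proof
    show "(\<Union>j\<in>{0..<m}. A j) \<subseteq> B" unfolding A_def by auto
    show "B \<subseteq> (\<Union>j\<in>{0..<m}. A j)"
    proof
      fix x assume x: "x \<in> B"
      then have "x \<in> closure B" using closure_subset by blast
      then obtain c where "c \<in> K" "x \<in> U c" using K(3) by blast
      then obtain j where "j < m" "cs ! j = c" using cs unfolding m_def by (metis in_set_conv_nth)
      then show "x \<in> (\<Union>j\<in>{0..<m}. A j)" using x \<open>x \<in> U c\<close> unfolding A_def by auto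
    qed
  qed
  finally have un: "(\<Union>j<m. D j) = B" .
  have AB: "A j \<in> sets borel" if "j < m" for j
  proof -
    have "cs ! j \<in> closure B" using that cs K(1) unfolding m_def by auto
    then have "open (U (cs ! j))" using U by blast
    then show ?thesis unfolding A_def using B by auto
  qed
  have "D j \<in> sets borel \<and> D j \<subseteq> B \<inter> U (cs ! j) \<and> cs ! j \<in> closure B" if "j < m" for j
  proof (intro conjI)
    have "cs ! j \<in> set cs" using that unfolding m_def by simp
    then show "cs ! j \<in> closure B" using cs K(1) by auto
    have "D j = A j - (\<Union>i\<in>{0..<j}. A i)" unfolding D_def by (simp add: disjointed_def)
    moreover have "(\<Union>i\<in>{0..<j}. A i) \<in> sets borel" using AB that by (intro sets.finite_UN) auto
    ultimately show "D j \<in> sets borel" using AB[OF that] by auto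
    show "D j \<subseteq> B \<inter> U (cs ! j)" unfolding D_def using disjointed_subset[of A j] A_def by auto
  qed
  then have "\<forall>j<m. D j \<in> sets borel \<and> D j \<subseteq> B \<inter> U ((\<lambda>j. cs ! j) j) \<and> (\<lambda>j. cs ! j) j \<in> closure B"
    by simp
  with dis un show ?thesis by blast
qed



lemma bdd_borel_subset: "bdd_borel B \<Longrightarrow> D \<in> sets borel \<Longrightarrow> D \<subseteq> B \<Longrightarrow> bdd_borel D"
  unfolding bdd_borel_def using bounded_subset by blast

lemma bdd_borel_Int_ball: "bdd_borel B \<Longrightarrow> bdd_borel (B \<inter> ball x r)"
  unfolding bdd_borel_def using bounded_subset by auto

lemma bdd_borel_Int_sing: "bdd_borel B \<Longrightarrow> bdd_borel (B \<inter> {x})"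
  unfolding bdd_borel_def using bounded_subset by auto

lemma bdd_borel_sing: "bdd_borel {x}"
  unfolding bdd_borel_def by auto

locale ppl =
  fixes M :: "'w measure" and Phi :: "'w \<Rightarrow> 'a::euclidean_space measure"
  assumes pp: "point_process M Phi"
begin

sublocale prob_space M using pp by (simp add: point_process_def)

lemma sets_Phi: "w \<in> space M \<Longrightarrow> sets (Phi w) = sets borel"
  using pp by (simp add: point_process_def)

lemma cnt_nat: assumes "bdd_borel B" "w \<in> space M"
  shows "\<exists>n::nat. emeasure (Phi w) B = of_nat n \<and> cnt Phi w B = real n"
proof -
  obtain n :: nat where "emeasure (Phi w) B = of_nat n"
    using pp assms unfolding point_process_def by blast
  then show ?thesis by (auto simp: cnt_def)
qed

lemma em_cnt: "bdd_borel B \<Longrightarrow> w \<in> space M \<Longrightarrow> emeasure (Phi w) B = ennreal (cnt Phi w B)"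
  using cnt_nat by (metis ennreal_of_nat_eq_real_of_nat)

lemma cnt_nonneg: "0 \<le> cnt Phi w B"
  by (simp add: cnt_def)

lemma cnt_meas[measurable]: "bdd_borel B \<Longrightarrow> (\<lambda>w. cnt Phi w B) \<in> borel_measurable M"
  using pp unfolding point_process_def cnt_def by (simp add: borel_measurable_enn2real)

lemma mean_nn: "bdd_borel B \<Longrightarrow> mean_measure M Phi B = (\<integral>\<^sup>+ w. ennreal (cnt Phi w B) \<partial>M)"
  unfolding mean_measure_def by (intro nn_integral_cong) (simp add: em_cnt)

lemma cnt_int: "radon_mean M Phi \<Longrightarrow> bdd_borel B \<Longrightarrow> integrable M (\<lambda>w. cnt Phi w B)"
  by (intro integrableI_nonneg) (auto simp: cnt_nonneg radon_mean_def mean_nn[symmetric])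

lemma mean_eq: "radon_mean M Phi \<Longrightarrow> bdd_borel B \<Longrightarrow>
   mean_measure M Phi B = ennreal (expectation (\<lambda>w. cnt Phi w B))"
  by (simp add: mean_nn cnt_int nn_integral_eq_integral cnt_nonneg)

lemma mean_real: "radon_mean M Phi \<Longrightarrow> bdd_borel B \<Longrightarrow>
   enn2real (mean_measure M Phi B) = expectation (\<lambda>w. cnt Phi w B)"
  by (simp add: mean_eq cnt_nonneg integral_nonneg_AE)

lemma cnt_mono: "bdd_borel B \<Longrightarrow> D \<in> sets borel \<Longrightarrow> D \<subseteq> B \<Longrightarrow> w \<in> space M \<Longrightarrow>
   cnt Phi w D \<le> cnt Phi w B"
proof -
  assume a: "bdd_borel B" "D \<in> sets borel" "D \<subseteq> B" "w \<in> space M"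
  then have "bdd_borel D" using bdd_borel_subset by blast
  have "emeasure (Phi w) D \<le> emeasure (Phi w) B"
    using a by (intro emeasure_mono) (auto simp: sets_Phi bdd_borel_def)
  then show ?thesis using a \<open>bdd_borel D\<close> by (simp add: em_cnt cnt_nonneg)
qed

lemma cnt_sum:
  fixes m :: nat
  assumes dis: "disjoint_family_on D {..<m}" and D: "\<And>j. j < m \<Longrightarrow> bdd_borel (D j)"
    and w: "w \<in> space M"
  shows "cnt Phi w (\<Union>j<m. D j) = (\<Sum>j<m. cnt Phi w (D j))"
proof -
  have bU: "bdd_borel (\<Union>j<m. D j)"
  proof -
    have "(\<Union>j<m. D j) \<in> sets borel" using D unfolding bdd_borel_def by (intro sets.finite_UN) auto
    moreover have "bounded (\<Union>j<m. D j)" using D unfolding bdd_borel_def by (intro bounded_UN) auto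
    ultimately show ?thesis by (simp add: bdd_borel_def)
  qed
  have "(\<Sum>j<m. emeasure (Phi w) (D j)) = emeasure (Phi w) (\<Union>j<m. D j)"
    using D dis w by (intro sum_emeasure) (auto simp: sets_Phi bdd_borel_def)
  then have "ennreal (\<Sum>j<m. cnt Phi w (D j)) = ennreal (cnt Phi w (\<Union>j<m. D j))"
    using D w bU by (simp add: em_cnt cnt_nonneg sum_ennreal)
  then show ?thesis by (simp add: cnt_nonneg sum_nonneg)
qed

end



definition hz :: "real \<Rightarrow> real" where "hz t = max 0 (min 1 (1 - t))"

lemma hz_01: "0 \<le> hz t" "hz t \<le> 1" by (auto simp: hz_def)
lemma hz_anti: "s \<le> t \<Longrightarrow> hz t \<le> hz s" by (auto simp: hz_def)
lemma hz_nat: "hz (real n) = (if n = 0 then 1 else 0)" by (auto simp: hz_def)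
lemma hz_ge: "0 \<le> t \<Longrightarrow> 1 - t \<le> hz t" by (auto simp: hz_def)
lemma hz_min: "0 \<le> t \<Longrightarrow> hz t = 1 - min 1 t" by (auto simp: hz_def)
lemma hz_cont: "continuous_on UNIV hz" unfolding hz_def by (intro continuous_intros)
lemma hz_meas[measurable]: "hz \<in> borel_measurable borel"
  using hz_cont by (simp add: borel_measurable_continuous_onI)

lemma prod_hz_01: "0 \<le> (\<Prod>j\<in>A. hz (x j))" "(\<Prod>j\<in>A. hz (x j)) \<le> 1"
  using hz_01 by (auto intro: prod_nonneg prod_le_1)

lemma abs_prod_hz: "\<bar>\<Prod>j\<in>A. hz (x j)\<bar> \<le> 1" using prod_hz_01[of x A] by auto

lemma prod_hz_anti: "(\<And>j. j\<in>A \<Longrightarrow> x j \<le> y j) \<Longrightarrow> (\<Prod>j\<in>A. hz (y j)) \<le> (\<Prod>j\<in>A. hz (x j))"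
  using hz_01 hz_anti by (intro prod_mono) auto

context ppl
begin

lemma cov_1m:
  assumes iF: "integrable M F" and iG: "integrable M G" and iFG: "integrable M (\<lambda>w. F w * G w)"
  shows "cov M (\<lambda>w. 1 - F w) (\<lambda>w. 1 - G w) = cov M F G"
proof -
  have i1: "integrable M (\<lambda>w. 1::real)" by simp
  have i1F: "integrable M (\<lambda>w. 1 - F w)" by (intro Bochner_Integration.integrable_diff i1 iF)
  have i1FG: "integrable M (\<lambda>w. 1 - F w - G w)" by (intro Bochner_Integration.integrable_diff i1F iG)
  have e: "(\<lambda>w. (1 - F w) * (1 - G w)) = (\<lambda>w. (1 - F w - G w) + F w * G w)"
    by (simp add: algebra_simps)
  have e2: "expectation (\<lambda>w. 1 - F w) = 1 - expectation F"
    using Bochner_Integration.integral_diff[OF i1 iF] by (simp add: prob_space)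
  have e3: "expectation (\<lambda>w. 1 - G w) = 1 - expectation G"
    using Bochner_Integration.integral_diff[OF i1 iG] by (simp add: prob_space)
  have "expectation (\<lambda>w. (1 - F w) * (1 - G w)) = expectation (\<lambda>w. 1 - F w - G w) + expectation (\<lambda>w. F w * G w)"
    unfolding e by (rule Bochner_Integration.integral_add[OF i1FG iFG])
  also have "expectation (\<lambda>w. 1 - F w - G w) = expectation (\<lambda>w. 1 - F w) - expectation G"
    by (rule Bochner_Integration.integral_diff[OF i1F iG])
  finally have e1: "expectation (\<lambda>w. (1 - F w) * (1 - G w)) = 1 - expectation F - expectation G + expectation (\<lambda>w. F w * G w)"
    using e2 by simp
  show ?thesis unfolding cov_def by (simp only: e1 e2 e3) (simp add: algebra_simps)
qed

lemma bnd_int: fixes f :: "'w \<Rightarrow> real" and c :: real shows "f \<in> borel_measurable M \<Longrightarrow> (\<And>w. \<bar>f w\<bar> \<le> c) \<Longrightarrow> integrable M f"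
  by (intro integrable_const_bound[where B=c]) auto

lemma cnt_vec_lt: "i < k \<Longrightarrow> cnt_vec Phi w k B i = cnt Phi w (B i)"
  by (simp add: cnt_vec_def)

lemma NA_zero:
  fixes m :: nat
  assumes na: "neg_associated M Phi"
  shows "disjoint_family_on D {..<m} \<Longrightarrow> (\<forall>j<m. bdd_borel (D j)) \<Longrightarrow>
    expectation (\<lambda>w. \<Prod>j<m. hz (cnt Phi w (D j))) \<le> (\<Prod>j<m. expectation (\<lambda>w. hz (cnt Phi w (D j))))"
proof (induction m)
  case 0
  then show ?case by (simp add: prob_space)
next
  case (Suc m)
  have D: "\<And>j. j < Suc m \<Longrightarrow> bdd_borel (D j)" using Suc.prems by auto
  have dis: "disjoint_family_on D {..<m}" by (rule disjoint_family_on_mono[OF _ Suc.prems(1)]) auto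
  define F where "F w = (\<Prod>j<m. hz (cnt Phi w (D j)))" for w
  define G where "G w = hz (cnt Phi w (D m))" for w
  have Fm: "F \<in> borel_measurable M" unfolding F_def using D by (measurable; auto)
  have Gm: "G \<in> borel_measurable M" unfolding G_def using D by (measurable; auto)
  have iF: "integrable M F" using Fm by (intro bnd_int[where c=1]) (auto simp: F_def abs_prod_hz)
  have iG: "integrable M G" using Gm hz_01 by (intro bnd_int[where c=1]) (auto simp: G_def)
  have iFG: "integrable M (\<lambda>w. F w * G w)"
  proof (rule bnd_int[where c=1])
    show "(\<lambda>w. F w * G w) \<in> borel_measurable M" using Fm Gm by (rule borel_measurable_times)
    fix w have "\<bar>F w\<bar> \<le> 1" by (simp add: F_def abs_prod_hz)
    moreover have "\<bar>G w\<bar> \<le> 1" using hz_01 by (simp add: G_def)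
    ultimately show "\<bar>F w * G w\<bar> \<le> 1" by (metis abs_ge_zero abs_mult mult_le_one)
  qed
  define f where "f x = 1 - (\<Prod>j<m. hz (x j))" for x :: "nat \<Rightarrow> real"
  define g where "g x = 1 - hz (x (0::nat))" for x :: "nat \<Rightarrow> real"
  define C where "C = (\<lambda>_::nat. D m)"
  have fF: "f (cnt_vec Phi w m D) = 1 - F w" for w
    unfolding f_def F_def by (simp add: cnt_vec_def)
  have gG: "g (cnt_vec Phi w 1 C) = 1 - G w" for w
    unfolding g_def G_def C_def by (simp add: cnt_vec_def)
  have dm: "D i \<inter> D m = {}" if "i < m" for i
    using Suc.prems(1) that unfolding disjoint_family_on_def by (metis lessThan_iff less_SucI lessI less_irrefl)
  have h1: "\<forall>i<m. bdd_borel (D i)" using D by simp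
  have h2: "\<forall>j<1. bdd_borel (C j)" using D unfolding C_def by simp
  have h3: "(\<Union>i<m. D i) \<inter> (\<Union>j<1. C j) = {}"
    unfolding C_def using dm by blast
  have h4: "depends_on m f" unfolding depends_on_def f_def by auto
  have h5: "depends_on 1 g" unfolding depends_on_def g_def by auto
  have h6: "incr_on m f"
  proof (unfold incr_on_def f_def, intro allI impI)
    fix x y :: "nat \<Rightarrow> real" assume "\<forall>i<m. x i \<le> y i"
    then have "(\<Prod>j<m. hz (y j)) \<le> (\<Prod>j<m. hz (x j))" by (intro prod_hz_anti) auto
    then show "1 - (\<Prod>j<m. hz (x j)) \<le> 1 - (\<Prod>j<m. hz (y j))" by simp
  qed
  have h7: "incr_on 1 g" unfolding incr_on_def g_def using hz_anti by auto
  have h8: "integrable M (\<lambda>w. f (cnt_vec Phi w m D))" unfolding fF using iF by simp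
  have h9: "integrable M (\<lambda>w. g (cnt_vec Phi w 1 C))" unfolding gG using iG by simp
  have h10: "integrable M (\<lambda>w. f (cnt_vec Phi w m D) * g (cnt_vec Phi w 1 C))"
    unfolding fF gG using iF iG iFG by (simp add: algebra_simps)
  have "cov M (\<lambda>w. f (cnt_vec Phi w m D)) (\<lambda>w. g (cnt_vec Phi w 1 C)) \<le> 0"
    using na[unfolded neg_associated_def, rule_format, where k=m and m=1 and B=D and C=C and f=f and g=g] h1 h2 h3 h4 h5 h6 h7 h8 h9 h10 by blast
  then have "cov M F G \<le> 0" unfolding fF gG using cov_1m[OF iF iG iFG] by simp
  then have "expectation (\<lambda>w. F w * G w) \<le> expectation F * expectation G" by (simp add: cov_def)
  also have "\<dots> \<le> (\<Prod>j<m. expectation (\<lambda>w. hz (cnt Phi w (D j)))) * expectation G"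
    using Suc.IH[OF dis] D hz_01 by (intro mult_right_mono) (auto simp: F_def[abs_def] G_def[abs_def] intro: integral_nonneg_AE)
  finally show ?case by (simp add: F_def[abs_def] G_def[abs_def])
qed

lemma cc: "continuous_on UNIV (\<lambda>x::nat\<Rightarrow>real. x j)" by simp

lemma A_zero:
  fixes m :: nat
  assumes a: "associated M Phi"
  shows "(\<forall>j<m. bdd_borel (D j)) \<Longrightarrow>
    expectation (\<lambda>w. \<Prod>j<m. hz (cnt Phi w (D j))) \<ge> (\<Prod>j<m. expectation (\<lambda>w. hz (cnt Phi w (D j))))"
proof (induction m)
  case 0
  then show ?case by (simp add: prob_space)
next
  case (Suc m)
  have D: "\<And>j. j < Suc m \<Longrightarrow> bdd_borel (D j)" using Suc.prems by auto
  define F where "F w = (\<Prod>j<m. hz (cnt Phi w (D j)))" for w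
  define G where "G w = hz (cnt Phi w (D m))" for w
  have Fm: "F \<in> borel_measurable M" unfolding F_def using D by (measurable; auto)
  have Gm: "G \<in> borel_measurable M" unfolding G_def using D by (measurable; auto)
  have iF: "integrable M F" using Fm by (intro bnd_int[where c=1]) (auto simp: F_def abs_prod_hz)
  have iG: "integrable M G" using Gm hz_01 by (intro bnd_int[where c=1]) (auto simp: G_def)
  have iFG: "integrable M (\<lambda>w. F w * G w)"
  proof (rule bnd_int[where c=1])
    show "(\<lambda>w. F w * G w) \<in> borel_measurable M" using Fm Gm by (rule borel_measurable_times)
    fix w have "\<bar>F w\<bar> \<le> 1" by (simp add: F_def abs_prod_hz)
    moreover have "\<bar>G w\<bar> \<le> 1" using hz_01 by (simp add: G_def)
    ultimately show "\<bar>F w * G w\<bar> \<le> 1" by (metis abs_ge_zero abs_mult mult_le_one)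
  qed
  define f where "f x = 1 - (\<Prod>j<m. hz (x j))" for x :: "nat \<Rightarrow> real"
  define g where "g x = 1 - hz (x m)" for x :: "nat \<Rightarrow> real"
  have fF: "f (cnt_vec Phi w (Suc m) D) = 1 - F w" for w
    unfolding f_def F_def by (simp add: cnt_vec_def)
  have gG: "g (cnt_vec Phi w (Suc m) D) = 1 - G w" for w
    unfolding g_def G_def by (simp add: cnt_vec_def)
  have "depends_on (Suc m) f" unfolding depends_on_def f_def by auto
  moreover have "depends_on (Suc m) g" unfolding depends_on_def g_def by auto
  moreover have "incr_on (Suc m) f"
  proof (unfold incr_on_def f_def, intro allI impI)
    fix x y :: "nat \<Rightarrow> real" assume "\<forall>i<Suc m. x i \<le> y i"
    then have "(\<Prod>j<m. hz (y j)) \<le> (\<Prod>j<m. hz (x j))" by (intro prod_hz_anti) auto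
    then show "1 - (\<Prod>j<m. hz (x j)) \<le> 1 - (\<Prod>j<m. hz (y j))" by simp
  qed
  moreover have "incr_on (Suc m) g" unfolding incr_on_def g_def using hz_anti by auto
  moreover have "continuous_on UNIV f" unfolding f_def
    by (intro continuous_intros continuous_on_compose2[OF hz_cont cc]) auto
  moreover have "continuous_on UNIV g" unfolding g_def
    by (intro continuous_intros continuous_on_compose2[OF hz_cont cc]) auto
  moreover have "\<forall>x. 0 \<le> f x \<and> f x \<le> 1" unfolding f_def using prod_hz_01 by auto
  moreover have "\<forall>x. 0 \<le> g x \<and> g x \<le> 1" unfolding g_def using hz_01 by auto
  moreover have "\<forall>i<Suc m. bdd_borel (D i)" using D by simp
  ultimately have "cov M (\<lambda>w. f (cnt_vec Phi w (Suc m) D)) (\<lambda>w. g (cnt_vec Phi w (Suc m) D)) \<ge> 0"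
    using a[unfolded associated_def, rule_format, where k="Suc m" and B=D and f=f and g=g] by blast
  then have "cov M F G \<ge> 0" unfolding fF gG using cov_1m[OF iF iG iFG] by simp
  then have "expectation (\<lambda>w. F w * G w) \<ge> expectation F * expectation G" by (simp add: cov_def)
  moreover have "expectation F * expectation G \<ge> (\<Prod>j<m. expectation (\<lambda>w. hz (cnt Phi w (D j)))) * expectation G"
    using Suc.IH D hz_01 by (intro mult_right_mono) (auto simp: F_def[abs_def] G_def[abs_def] intro: integral_nonneg_AE)
  ultimately have "(\<Prod>j<m. expectation (\<lambda>w. hz (cnt Phi w (D j)))) * expectation G \<le> expectation (\<lambda>w. F w * G w)"
    by linarith
  then show ?case by (simp add: F_def[abs_def] G_def[abs_def])
qed

end



lemma hz_ge1: "1 \<le> t \<Longrightarrow> hz t = 0" by (simp add: hz_def)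

lemma Inter_balls: "(\<Inter>n. ball x (inverse (real (Suc n)))) = {x}"
proof
  show "{x} \<subseteq> (\<Inter>n. ball x (inverse (real (Suc n))))" by auto
  show "(\<Inter>n. ball x (inverse (real (Suc n)))) \<subseteq> {x}"
  proof
    fix y assume y: "y \<in> (\<Inter>n. ball x (inverse (real (Suc n))))"
    show "y \<in> {x}"
    proof (rule ccontr)
      assume "y \<notin> {x}"
      then have "0 < dist x y" by auto
      then obtain n where n: "inverse (real (Suc n)) < dist x y" using reals_Archimedean by blast
      have "y \<in> ball x (inverse (real (Suc n)))" using y by (rule INT_D) simp
      then have "dist x y < inverse (real (Suc n))" by (simp only: mem_ball)
      with n show False by linarith
    qed
  qed
qed

lemma inv_Suc_mono: "n \<le> n' \<Longrightarrow> inverse (real (Suc n')) \<le> inverse (real (Suc n))"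
  by (simp add: le_imp_inverse_le)

context ppl
begin

lemma cnt_empty: "cnt Phi w {} = 0" by (simp add: cnt_def)

lemma cnt_ge1: "bdd_borel D \<Longrightarrow> w \<in> space M \<Longrightarrow> cnt Phi w D \<noteq> 0 \<Longrightarrow> 1 \<le> cnt Phi w D"
  using cnt_nat by fastforce

lemma cnt_le1: "bdd_borel D \<Longrightarrow> w \<in> space M \<Longrightarrow> cnt Phi w D < 2 \<Longrightarrow> cnt Phi w D \<le> 1"
proof -
  assume a: "bdd_borel D" "w \<in> space M" "cnt Phi w D < 2"
  then obtain n :: nat where "cnt Phi w D = real n" using cnt_nat by blast
  with a(3) show ?thesis by simp
qed

lemma prob_zero: "bdd_borel B \<Longrightarrow>
  prob {w\<in>space M. emeasure (Phi w) B = 0} = expectation (\<lambda>w. hz (cnt Phi w B))"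
proof -
  assume B: "bdd_borel B"
  have "expectation (\<lambda>w. hz (cnt Phi w B)) = expectation (indicator {w\<in>space M. emeasure (Phi w) B = 0})"
  proof (intro Bochner_Integration.integral_cong refl)
    fix w assume w: "w \<in> space M"
    then obtain n :: nat where n: "emeasure (Phi w) B = of_nat n" "cnt Phi w B = real n"
      using cnt_nat B by blast
    show "hz (cnt Phi w B) = indicator {w\<in>space M. emeasure (Phi w) B = 0} w"
      using n w by (simp add: hz_nat indicator_def)
  qed
  also have "\<dots> = prob {w\<in>space M. emeasure (Phi w) B = 0}"
    by (simp add: Int_absorb2)
  finally show ?thesis by simp
qed

lemma hz_partition:
  fixes m :: nat
  assumes dis: "disjoint_family_on D {..<m}" and D: "\<forall>j<m. bdd_borel (D j)"
    and un: "(\<Union>j<m. D j) = B" and w: "w \<in> space M"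
  shows "hz (cnt Phi w B) = (\<Prod>j<m. hz (cnt Phi w (D j)))"
proof -
  have s: "cnt Phi w B = (\<Sum>j<m. cnt Phi w (D j))"
    using cnt_sum[OF dis _ w] D un by auto
  show ?thesis
  proof (cases "\<forall>j<m. cnt Phi w (D j) = 0")
    case True
    then show ?thesis unfolding s by (simp add: hz_def)
  next
    case False
    then obtain j where j: "j < m" "cnt Phi w (D j) \<noteq> 0" by blast
    then have j1: "1 \<le> cnt Phi w (D j)" using cnt_ge1 D w by blast
    have "cnt Phi w (D j) \<le> (\<Sum>j<m. cnt Phi w (D j))"
      using j by (intro member_le_sum) (auto simp: cnt_nonneg)
    then have "hz (cnt Phi w B) = 0" using j1 s by (intro hz_ge1) linarith
    moreover have "(\<Prod>j<m. hz (cnt Phi w (D j))) = 0"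
      using j j1 by (intro prod_zero) (auto intro!: bexI[of _ j] hz_ge1)
    ultimately show ?thesis by simp
  qed
qed

lemma cnt_ball_conv:
  assumes B: "bdd_borel B" and w: "w \<in> space M"
  shows "(\<lambda>n. cnt Phi w (B \<inter> ball x (inverse (real (Suc n))))) \<longlonglongrightarrow> cnt Phi w (B \<inter> {x})"
proof -
  define A where "A n = B \<inter> ball x (inverse (real (Suc n)))" for n
  have bA: "bdd_borel (A n)" for n unfolding A_def using B by (rule bdd_borel_Int_ball)
  have "range A \<subseteq> sets (Phi w)" using bA w by (auto simp: sets_Phi bdd_borel_def)
  moreover have "decseq A" unfolding decseq_def A_def
  proof (intro allI impI)
    fix m n :: nat assume "m \<le> n"
    then show "B \<inter> ball x (inverse (real (Suc n))) \<subseteq> B \<inter> ball x (inverse (real (Suc m)))"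
      using inv_Suc_mono[of m n] by (meson Int_mono order_refl subset_ball)
  qed
  moreover have "emeasure (Phi w) (A n) \<noteq> \<infinity>" for n using bA w by (simp add: em_cnt)
  ultimately have "(\<lambda>n. emeasure (Phi w) (A n)) \<longlonglongrightarrow> emeasure (Phi w) (\<Inter>n. A n)"
    by (rule Lim_emeasure_decseq)
  moreover have "(\<Inter>n. A n) = B \<inter> {x}" unfolding A_def using Inter_balls[of x] by blast
  ultimately have "(\<lambda>n. ennreal (cnt Phi w (A n))) \<longlonglongrightarrow> ennreal (cnt Phi w (B \<inter> {x}))"
    using bA w B by (simp add: em_cnt bdd_borel_Int_sing)
  then show ?thesis unfolding A_def[symmetric] by (simp add: cnt_nonneg)
qed

lemma E_ball_conv:
  assumes r: "radon_mean M Phi" and B: "bdd_borel B"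
  shows "(\<lambda>n. expectation (\<lambda>w. cnt Phi w (B \<inter> ball x (inverse (real (Suc n))))))
           \<longlonglongrightarrow> expectation (\<lambda>w. cnt Phi w (B \<inter> {x}))"
proof (rule integral_dominated_convergence[where w="\<lambda>w. cnt Phi w B"])
  show "(\<lambda>w. cnt Phi w (B \<inter> {x})) \<in> borel_measurable M"
    using B by (intro cnt_meas bdd_borel_Int_sing)
  show "(\<lambda>w. cnt Phi w (B \<inter> ball x (inverse (real (Suc n))))) \<in> borel_measurable M" for n
    using B by (intro cnt_meas bdd_borel_Int_ball)
  show "integrable M (\<lambda>w. cnt Phi w B)" using r B by (rule cnt_int)
  show "AE w in M. (\<lambda>n. cnt Phi w (B \<inter> ball x (inverse (real (Suc n))))) \<longlonglongrightarrow> cnt Phi w (B \<inter> {x})"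
    using cnt_ball_conv[OF B] by (intro AE_I2) auto
  show "AE w in M. norm (cnt Phi w (B \<inter> ball x (inverse (real (Suc n))))) \<le> cnt Phi w B" for n
    using B by (intro AE_I2) (auto simp: cnt_nonneg bdd_borel_def intro!: cnt_mono)
qed

end



lemma exp_bound:
  fixes e eps :: real
  assumes "0 \<le> e" "e \<le> eps" "eps < 1"
  shows "exp (- e / (1 - eps)) \<le> 1 - e"
proof -
  have p: "0 < 1 - e" using assms by linarith
  have "ln (inverse (1 - e)) \<le> inverse (1 - e) - 1" using p by (intro ln_le_minus_one) simp
  then have "- ln (1 - e) \<le> inverse (1 - e) - 1" using p by (simp add: ln_inverse)
  moreover have "inverse (1 - e) - 1 = e / (1 - e)" using p by (simp add: field_simps)
  moreover have "e / (1 - e) \<le> e / (1 - eps)" using assms p by (intro divide_left_mono) auto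
  ultimately have "- e / (1 - eps) \<le> ln (1 - e)" by simp
  then have "exp (- e / (1 - eps)) \<le> exp (ln (1 - e))" by simp
  then show ?thesis using p by simp
qed

context ppl
begin

lemma hz_int: "bdd_borel D \<Longrightarrow> integrable M (\<lambda>w. hz (cnt Phi w D))"
  by (intro bnd_int[where c=1]) (auto simp: hz_def)

lemma E_hz_ge: "radon_mean M Phi \<Longrightarrow> bdd_borel D \<Longrightarrow>
   1 - expectation (\<lambda>w. cnt Phi w D) \<le> expectation (\<lambda>w. hz (cnt Phi w D))"
proof -
  assume r: "radon_mean M Phi" and D: "bdd_borel D"
  have "1 - expectation (\<lambda>w. cnt Phi w D) = expectation (\<lambda>w. 1 - cnt Phi w D)"
    using Bochner_Integration.integral_diff[of M "\<lambda>w. 1" "\<lambda>w. cnt Phi w D"] cnt_int[OF r D]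
    by (simp add: prob_space)
  also have "\<dots> \<le> expectation (\<lambda>w. hz (cnt Phi w D))"
    using cnt_int[OF r D] hz_int[OF D]
    by (intro integral_mono) (auto intro: hz_ge cnt_nonneg)
  finally show ?thesis .
qed

lemma E_sum_partition:
  fixes m :: nat
  assumes r: "radon_mean M Phi" and dis: "disjoint_family_on D {..<m}" and D: "\<forall>j<m. bdd_borel (D j)"
    and un: "(\<Union>j<m. D j) = B"
  shows "(\<Sum>j<m. expectation (\<lambda>w. cnt Phi w (D j))) = expectation (\<lambda>w. cnt Phi w B)"
proof -
  have "(\<Sum>j<m. expectation (\<lambda>w. cnt Phi w (D j))) = expectation (\<lambda>w. \<Sum>j<m. cnt Phi w (D j))"
    using D r by (intro Bochner_Integration.integral_sum[symmetric] cnt_int) auto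
  also have "\<dots> = expectation (\<lambda>w. cnt Phi w B)"
    using cnt_sum[OF dis] D un by (intro Bochner_Integration.integral_cong refl) auto
  finally show ?thesis .
qed

lemma small_ball:
  assumes r: "radon_mean M Phi" and df: "diffuse_mean M Phi" and B: "bdd_borel B" and e: "0 < eps"
  shows "\<exists>r>0. expectation (\<lambda>w. cnt Phi w (B \<inter> ball x r)) < eps"
proof -
  have "expectation (\<lambda>w. cnt Phi w (B \<inter> {x})) \<le> expectation (\<lambda>w. cnt Phi w {x})"
    using B r by (intro integral_mono cnt_int bdd_borel_Int_sing bdd_borel_sing cnt_mono)
      (auto simp: bdd_borel_def)
  also have "\<dots> = 0" using mean_real[OF r bdd_borel_sing, of x] df by (simp add: diffuse_mean_def)
  finally have "expectation (\<lambda>w. cnt Phi w (B \<inter> {x})) < eps" using e by linarith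
  from order_tendstoD(2)[OF E_ball_conv[OF r B] this]
  obtain n where "expectation (\<lambda>w. cnt Phi w (B \<inter> ball x (inverse (real (Suc n))))) < eps"
    by (auto simp: eventually_sequentially)
  then show ?thesis by (intro exI[of _ "inverse (real (Suc n))"]) auto
qed

lemma nu_super_eps:
  assumes a: "associated M Phi" and r: "radon_mean M Phi" and df: "diffuse_mean M Phi"
    and B: "bdd_borel B" and e: "0 < eps" "eps < 1"
  shows "exp (- expectation (\<lambda>w. cnt Phi w B) / (1 - eps)) \<le> prob {w\<in>space M. emeasure (Phi w) B = 0}"
proof -
  have "\<forall>x. \<exists>r>0. expectation (\<lambda>w. cnt Phi w (B \<inter> ball x r)) < eps"
    using small_ball[OF r df B e(1)] by blast
  then obtain rr where rr: "\<And>x. rr x > 0" "\<And>x. expectation (\<lambda>w. cnt Phi w (B \<inter> ball x (rr x))) < eps"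
    by metis
  obtain m :: nat and c D where P: "disjoint_family_on D {..<m}" "(\<Union>j<m. D j) = B"
    "\<forall>j<m. D j \<in> sets borel \<and> D j \<subseteq> B \<inter> ball (c j) (rr (c j)) \<and> c j \<in> closure B"
    using partition_cover[of B "\<lambda>x. ball x (rr x)"] B rr(1) unfolding bdd_borel_def by auto
  have D: "\<forall>j<m. bdd_borel (D j)" using P(3) B bdd_borel_subset by blast
  define ej where "ej j = expectation (\<lambda>w. cnt Phi w (D j))" for j
  have ej0: "0 \<le> ej j" for j unfolding ej_def by (intro integral_nonneg_AE) (auto simp: cnt_nonneg)
  have ejs: "ej j \<le> eps" if j: "j < m" for j
  proof -
    have "ej j \<le> expectation (\<lambda>w. cnt Phi w (B \<inter> ball (c j) (rr (c j))))"
      unfolding ej_def using D j P(3) B r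
      by (intro integral_mono cnt_int cnt_mono bdd_borel_Int_ball) (auto simp: bdd_borel_def)
    then show ?thesis using rr(2)[of "c j"] by linarith
  qed
  have "exp (- expectation (\<lambda>w. cnt Phi w B) / (1 - eps)) = exp (\<Sum>j<m. - ej j / (1 - eps))"
    using E_sum_partition[OF r P(1) D P(2)] unfolding ej_def
    by (simp add: sum_divide_distrib[symmetric] sum_negf)
  also have "\<dots> = (\<Prod>j<m. exp (- ej j / (1 - eps)))" by (simp add: exp_sum)
  also have "\<dots> \<le> (\<Prod>j<m. expectation (\<lambda>w. hz (cnt Phi w (D j))))"
  proof (intro prod_mono conjI)
    fix j assume "j \<in> {..<m}"
    then have j: "j < m" by simp
    show "0 \<le> exp (- ej j / (1 - eps))" by simp
    have "exp (- ej j / (1 - eps)) \<le> 1 - ej j" using ej0 ejs[OF j] e by (intro exp_bound) auto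
    also have "\<dots> \<le> expectation (\<lambda>w. hz (cnt Phi w (D j)))" unfolding ej_def
      using E_hz_ge[OF r] D j by auto
    finally show "exp (- ej j / (1 - eps)) \<le> expectation (\<lambda>w. hz (cnt Phi w (D j)))" .
  qed
  also have "\<dots> \<le> expectation (\<lambda>w. \<Prod>j<m. hz (cnt Phi w (D j)))"
    using A_zero[OF a] D by blast
  also have "\<dots> = expectation (\<lambda>w. hz (cnt Phi w B))"
    using hz_partition[OF P(1) D P(2)] by (intro Bochner_Integration.integral_cong refl) auto
  also have "\<dots> = prob {w\<in>space M. emeasure (Phi w) B = 0}" using prob_zero[OF B] by simp
  finally show ?thesis .
qed

lemma nu_super:
  assumes a: "associated M Phi" and r: "radon_mean M Phi" and df: "diffuse_mean M Phi"
  shows "nu_weakly_super M Phi"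
  unfolding nu_weakly_super_def
proof (intro allI impI)
  fix B :: "'a set" assume B: "bdd_borel B"
  define a where "a = expectation (\<lambda>w. cnt Phi w B)"
  define ep where "ep n = inverse (real (Suc n)) / 2" for n
  have ep: "0 < ep n" "ep n < 1" for n unfolding ep_def by (auto simp: field_simps)
  have "ep \<longlonglongrightarrow> 0 / 2" unfolding ep_def by (intro tendsto_divide LIMSEQ_inverse_real_of_nat tendsto_const) auto
  then have "(\<lambda>n. exp (- a / (1 - ep n))) \<longlonglongrightarrow> exp (- a / (1 - 0 / 2))"
    by (intro tendsto_intros) auto
  then have lim: "(\<lambda>n. exp (- a / (1 - ep n))) \<longlonglongrightarrow> exp (- a)" by simp
  have "\<forall>n\<ge>0. exp (- a / (1 - ep n)) \<le> prob {w\<in>space M. emeasure (Phi w) B = 0}"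
    using nu_super_eps[OF a r df B ep] unfolding a_def by blast
  then have "exp (- a) \<le> prob {w\<in>space M. emeasure (Phi w) B = 0}"
    by (intro LIMSEQ_le_const2[OF lim]) blast
  then show "exp (- enn2real (mean_measure M Phi B)) \<le> prob {w\<in>space M. emeasure (Phi w) B = 0}"
    using mean_real[OF r B] unfolding a_def by simp
qed

end



context ppl
begin

lemma loc_le1:
  assumes B: "bdd_borel B" and w: "w \<in> space M" and s: "\<forall>x. emeasure (Phi w) {x} \<le> 1"
  shows "\<exists>e>0. \<forall>y\<in>B. cnt Phi w (B \<inter> ball y e) \<le> 1"
proof -
  have "\<exists>r>0. cnt Phi w (B \<inter> ball x r) \<le> 1" for x
  proof -
    have "emeasure (Phi w) {x} = ennreal (cnt Phi w {x})" by (rule em_cnt[OF bdd_borel_sing w])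
    then have "cnt Phi w {x} \<le> 1" using s by (metis ennreal_le_1)
    moreover have "cnt Phi w (B \<inter> {x}) \<le> cnt Phi w {x}"
      using w by (intro cnt_mono bdd_borel_sing) (auto simp: bdd_borel_def B[unfolded bdd_borel_def])
    ultimately have "cnt Phi w (B \<inter> {x}) < 2" by linarith
    from order_tendstoD(2)[OF cnt_ball_conv[OF B w] this]
    obtain n where n: "cnt Phi w (B \<inter> ball x (inverse (real (Suc n)))) < 2"
      by (auto simp: eventually_sequentially)
    have "cnt Phi w (B \<inter> ball x (inverse (real (Suc n)))) \<le> 1"
      using n w B by (intro cnt_le1 bdd_borel_Int_ball)
    then show ?thesis by (intro exI[of _ "inverse (real (Suc n))"]) auto
  qed
  then obtain rr where rr: "\<And>x. rr x > 0" "\<And>x. cnt Phi w (B \<inter> ball x (rr x)) \<le> 1"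
    by metis
  have "compact (closure B)" using B by (simp add: bdd_borel_def compact_closure)
  moreover have "closure B \<subseteq> \<Union>((\<lambda>x. ball x (rr x)) ` closure B)" using rr(1) by auto
  ultimately obtain e where e: "0 < e" "\<And>y. y \<in> closure B \<Longrightarrow> \<exists>G\<in>(\<lambda>x. ball x (rr x)) ` closure B. ball y e \<subseteq> G"
    by (rule Heine_Borel_lemma) auto
  have "cnt Phi w (B \<inter> ball y e) \<le> 1" if y: "y \<in> B" for y
  proof -
    obtain x where "ball y e \<subseteq> ball x (rr x)" using e(2)[of y] y closure_subset by blast
    then have "cnt Phi w (B \<inter> ball y e) \<le> cnt Phi w (B \<inter> ball x (rr x))"
      using B w by (intro cnt_mono bdd_borel_Int_ball) (auto simp: bdd_borel_def)
    then show ?thesis using rr(2)[of x] by linarith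
  qed
  then show ?thesis using e(1) by blast
qed

lemma occ_eventually:
  fixes m :: "nat \<Rightarrow> nat"
  assumes B: "bdd_borel B" and w: "w \<in> space M" and s: "\<forall>x. emeasure (Phi w) {x} \<le> 1"
    and P: "\<And>n. disjoint_family_on (D n) {..<m n} \<and> (\<Union>j<m n. D n j) = B \<and>
      (\<forall>j<m n. D n j \<in> sets borel \<and> D n j \<subseteq> B \<inter> ball (c n j) (inverse (real (Suc n))))"
  shows "eventually (\<lambda>n. (\<Sum>j<m n. min 1 (cnt Phi w (D n j))) = cnt Phi w B) sequentially"
proof -
  obtain e where e: "0 < e" "\<And>y. y \<in> B \<Longrightarrow> cnt Phi w (B \<inter> ball y e) \<le> 1"
    using loc_le1[OF B w s] by blast
  obtain N where N: "inverse (real (Suc N)) < e / 2" using reals_Archimedean[of "e/2"] e(1) by auto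
  have "(\<Sum>j<m n. min 1 (cnt Phi w (D n j))) = cnt Phi w B" if n: "N \<le> n" for n
  proof -
    have Dn: "\<forall>j<m n. bdd_borel (D n j)" using P[of n] B bdd_borel_subset by blast
    have le1: "cnt Phi w (D n j) \<le> 1" if j: "j < m n" for j
    proof (cases "D n j = {}")
      case True
      then show ?thesis by (simp add: cnt_empty)
    next
      case False
      then obtain y where y: "y \<in> D n j" by blast
      have sub: "D n j \<subseteq> B \<inter> ball (c n j) (inverse (real (Suc n)))" using P[of n] j by blast
      have "D n j \<subseteq> B \<inter> ball y e"
      proof
        fix z assume z: "z \<in> D n j"
        have "dist (c n j) y < inverse (real (Suc n))" "dist (c n j) z < inverse (real (Suc n))"
          using sub y z by auto
        moreover have "inverse (real (Suc n)) \<le> inverse (real (Suc N))" using n by (rule inv_Suc_mono)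
        moreover have "dist y z \<le> dist (c n j) y + dist (c n j) z"
          using dist_triangle[of y z "c n j"] by (simp add: dist_commute)
        ultimately have "dist y z < e" using N by linarith
        then show "z \<in> B \<inter> ball y e" using sub z by auto
      qed
      moreover have "y \<in> B" using sub y by blast
      ultimately show ?thesis using e(2)[of y] B w P[of n] j
        by (meson bdd_borel_Int_ball cnt_mono order_trans)
    qed
    have "(\<Sum>j<m n. min 1 (cnt Phi w (D n j))) = (\<Sum>j<m n. cnt Phi w (D n j))"
      using le1 by (intro sum.cong) auto
    also have "\<dots> = cnt Phi w B"
      using cnt_sum[of "D n" "m n" w] P[of n] Dn w by auto
    finally show ?thesis .
  qed
  then show ?thesis by (intro eventually_sequentiallyI)
qed

lemma nu_sub:
  assumes na: "neg_associated M Phi" and sp: "simple_pp M Phi" and r: "radon_mean M Phi"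
  shows "nu_weakly_sub M Phi"
  unfolding nu_weakly_sub_def
proof (intro allI impI)
  fix B :: "'a set" assume B: "bdd_borel B"
  have "\<forall>n. \<exists>(m::nat) c D. disjoint_family_on D {..<m} \<and> (\<Union>j<m. D j) = B \<and>
      (\<forall>j<m. D j \<in> sets borel \<and> D j \<subseteq> B \<inter> ball (c j) (inverse (real (Suc n))) \<and> c j \<in> closure B)"
  proof
    fix n show "\<exists>(m::nat) c D. disjoint_family_on D {..<m} \<and> (\<Union>j<m. D j) = B \<and>
      (\<forall>j<m. D j \<in> sets borel \<and> D j \<subseteq> B \<inter> ball (c j) (inverse (real (Suc n))) \<and> c j \<in> closure B)"
      using partition_cover[of B "\<lambda>x. ball x (inverse (real (Suc n)))"] B unfolding bdd_borel_def by auto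
  qed
  then obtain m :: "nat \<Rightarrow> nat" and c D where P0: "\<And>n. disjoint_family_on (D n) {..<m n} \<and> (\<Union>j<m n. D n j) = B \<and>
      (\<forall>j<m n. D n j \<in> sets borel \<and> D n j \<subseteq> B \<inter> ball (c n j) (inverse (real (Suc n))) \<and> c n j \<in> closure B)"
    by metis
  have P: "\<And>n. disjoint_family_on (D n) {..<m n} \<and> (\<Union>j<m n. D n j) = B \<and>
      (\<forall>j<m n. D n j \<in> sets borel \<and> D n j \<subseteq> B \<inter> ball (c n j) (inverse (real (Suc n))))"
    using P0 by blast
  have Dn: "\<forall>j<m n. bdd_borel (D n j)" for n using P[of n] B bdd_borel_subset by blast
  define occ where "occ n w = (\<Sum>j<m n. min 1 (cnt Phi w (D n j)))" for n w
  define a where "a = expectation (\<lambda>w. cnt Phi w B)"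
  define pz where "pz = prob {w\<in>space M. emeasure (Phi w) B = 0}"
  have mint: "integrable M (\<lambda>w. min 1 (cnt Phi w (D n j)))" if "j < m n" for n j
    using Dn that by (intro bnd_int[where c=1]) (auto simp: cnt_nonneg)
  have occm: "occ n \<in> borel_measurable M" for n
    unfolding occ_def using Dn by (intro borel_measurable_sum borel_measurable_min) auto
  have bound: "pz \<le> exp (- expectation (occ n))" for n
  proof -
    define ej where "ej j = expectation (\<lambda>w. min 1 (cnt Phi w (D n j)))" for j
    have hzj: "expectation (\<lambda>w. hz (cnt Phi w (D n j))) = 1 - ej j" if j: "j < m n" for j
    proof -
      have "expectation (\<lambda>w. hz (cnt Phi w (D n j))) = expectation (\<lambda>w. 1 - min 1 (cnt Phi w (D n j)))"
        by (intro Bochner_Integration.integral_cong refl) (simp add: hz_min cnt_nonneg)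
      also have "\<dots> = 1 - ej j" unfolding ej_def
        using Bochner_Integration.integral_diff[of M "\<lambda>w. 1" "\<lambda>w. min 1 (cnt Phi w (D n j))"] mint[OF j]
        by (simp add: prob_space)
      finally show ?thesis .
    qed
    have "pz = expectation (\<lambda>w. hz (cnt Phi w B))" unfolding pz_def using prob_zero[OF B] .
    also have "\<dots> = expectation (\<lambda>w. \<Prod>j<m n. hz (cnt Phi w (D n j)))"
      using hz_partition[of "D n" "m n" B] P[of n] Dn by (intro Bochner_Integration.integral_cong refl) auto
    also have "\<dots> \<le> (\<Prod>j<m n. expectation (\<lambda>w. hz (cnt Phi w (D n j))))"
      using NA_zero[OF na] P[of n] Dn by blast
    also have "\<dots> = (\<Prod>j<m n. 1 - ej j)" using hzj by (intro prod.cong) auto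
    also have "\<dots> \<le> (\<Prod>j<m n. exp (- ej j))"
    proof (intro prod_mono conjI)
      fix j assume "j \<in> {..<m n}"
      then have j: "j < m n" by simp
      have "0 \<le> expectation (\<lambda>w. hz (cnt Phi w (D n j)))" by (intro integral_nonneg_AE) (auto simp: hz_def)
      then show "0 \<le> 1 - ej j" using hzj[OF j] by simp
      show "1 - ej j \<le> exp (- ej j)" using exp_ge_add_one_self[of "- ej j"] by simp
    qed
    also have "\<dots> = exp (- (\<Sum>j<m n. ej j))" by (simp only: sum_negf[symmetric] exp_sum[OF finite_lessThan])
    also have "(\<Sum>j<m n. ej j) = expectation (occ n)"
      unfolding ej_def occ_def using mint by (intro Bochner_Integration.integral_sum[symmetric]) auto
    finally show ?thesis .
  qed
  have lim: "(\<lambda>n. expectation (occ n)) \<longlonglongrightarrow> a"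
    unfolding a_def
  proof (rule integral_dominated_convergence[where w="\<lambda>w. cnt Phi w B"])
    show "(\<lambda>w. cnt Phi w B) \<in> borel_measurable M" using B by (rule cnt_meas)
    show "occ n \<in> borel_measurable M" for n by (rule occm)
    show "integrable M (\<lambda>w. cnt Phi w B)" using r B by (rule cnt_int)
    show "AE w in M. (\<lambda>n. occ n w) \<longlonglongrightarrow> cnt Phi w B"
      using sp unfolding simple_pp_def
    proof (elim AE_mp, intro AE_I2 impI)
      fix w assume w: "w \<in> space M" and s: "\<forall>x. emeasure (Phi w) {x} \<le> 1"
      show "(\<lambda>n. occ n w) \<longlonglongrightarrow> cnt Phi w B"
        unfolding occ_def
        by (rule Lim_transform_eventually[OF tendsto_const]) (use occ_eventually[OF B w s P] in \<open>simp add: eq_commute\<close>)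
    qed
    show "AE w in M. norm (occ n w) \<le> cnt Phi w B" for n
    proof (intro AE_I2)
      fix w assume w: "w \<in> space M"
      have "0 \<le> occ n w" unfolding occ_def by (intro sum_nonneg) (auto simp: cnt_nonneg)
      moreover have "occ n w \<le> (\<Sum>j<m n. cnt Phi w (D n j))" unfolding occ_def by (intro sum_mono) auto
      moreover have "(\<Sum>j<m n. cnt Phi w (D n j)) = cnt Phi w B"
        using cnt_sum[of "D n" "m n" w] P[of n] Dn w by auto
      ultimately show "norm (occ n w) \<le> cnt Phi w B" by simp
    qed
  qed
  then have "(\<lambda>n. exp (- expectation (occ n))) \<longlonglongrightarrow> exp (- a)" by (intro tendsto_intros)
  then have "pz \<le> exp (- a)" using bound by (intro LIMSEQ_le_const) auto
  then show "prob {w\<in>space M. emeasure (Phi w) B = 0} \<le> exp (- enn2real (mean_measure M Phi B))"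
    using mean_real[OF r B] unfolding a_def pz_def by simp
qed

end



lemma SUP_min1: "0 \<le> (a::real) \<Longrightarrow> (SUP n. ennreal (min (real n) a)) = ennreal a"
proof (rule antisym)
  assume a: "0 \<le> a"
  show "(SUP n. ennreal (min (real n) a)) \<le> ennreal a" by (intro SUP_least ennreal_leI) auto
  obtain n :: nat where "a \<le> real n" using real_arch_simple by blast
  then have eq: "ennreal a = ennreal (min (real n) a)" by simp
  have "ennreal (min (real n) a) \<le> (SUP n. ennreal (min (real n) a))" by (rule SUP_upper) simp
  then show "ennreal a \<le> (SUP n. ennreal (min (real n) a))" by (simp only: eq)
qed

lemma SUP_min2: "0 \<le> (a::real) \<Longrightarrow> 0 \<le> b \<Longrightarrow>
   (SUP n. ennreal (min (real n) a * min (real n) b)) = ennreal (a * b)"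
proof (rule antisym)
  assume a: "0 \<le> a" and b: "0 \<le> b"
  show "(SUP n. ennreal (min (real n) a * min (real n) b)) \<le> ennreal (a * b)"
  proof (rule SUP_least)
    fix n :: nat
    have "min (real n) a * min (real n) b \<le> a * b"
      by (rule mult_mono) (use a b in auto)
    then show "ennreal (min (real n) a * min (real n) b) \<le> ennreal (a * b)" by (rule ennreal_leI)
  qed
  obtain n :: nat where "max a b \<le> real n" using real_arch_simple by blast
  then have eq: "ennreal (a * b) = ennreal (min (real n) a * min (real n) b)" by simp
  have "ennreal (min (real n) a * min (real n) b) \<le> (SUP n. ennreal (min (real n) a * min (real n) b))"
    by (rule SUP_upper) simp
  then show "ennreal (a * b) \<le> (SUP n. ennreal (min (real n) a * min (real n) b))" by (simp only: eq)
qed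

lemma SUP_prod_le:
  fixes a b :: "nat \<Rightarrow> ennreal"
  assumes "incseq a" "incseq b" "\<And>n. a n * b n \<le> c"
  shows "(SUP i. a i) * (SUP j. b j) \<le> c"
proof -
  have "a i * b j \<le> c" for i j
  proof -
    have "a i * b j \<le> a (max i j) * b (max i j)"
      using assms(1,2) by (intro mult_mono) (auto simp: incseq_def)
    then show ?thesis using assms(3) order_trans by blast
  qed
  then show ?thesis
    by (simp add: SUP_mult_right_ennreal SUP_mult_left_ennreal SUP_least)
qed

lemma min_inv_01: "0 \<le> t \<Longrightarrow> 0 \<le> min (real n) t * inverse (real n) \<and> min (real n) t * inverse (real n) \<le> 1"
  by (cases "n = 0") (auto simp: field_simps)

context ppl
begin

lemma cov_scale: "cov M (\<lambda>w. F w * c) (\<lambda>w. G w * c) = cov M F G * (c * c)"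
proof -
  have "(\<lambda>w. F w * c * (G w * c)) = (\<lambda>w. F w * G w * (c * c))" by (auto simp: algebra_simps)
  then show ?thesis unfolding cov_def by (simp add: algebra_simps)
qed

lemma nn_trunc:
  assumes "P \<in> borel_measurable M" "\<And>w. 0 \<le> P w"
  shows "(\<integral>\<^sup>+ w. ennreal (P w) \<partial>M) = (SUP n. \<integral>\<^sup>+ w. ennreal (min (real n) (P w)) \<partial>M)"
proof -
  have "(\<integral>\<^sup>+ w. ennreal (P w) \<partial>M) = (\<integral>\<^sup>+ w. (SUP n. ennreal (min (real n) (P w))) \<partial>M)"
    using assms(2) by (simp add: SUP_min1)
  also have "\<dots> = (SUP n. \<integral>\<^sup>+ w. ennreal (min (real n) (P w)) \<partial>M)"
    using assms by (intro nn_integral_monotone_convergence_SUP)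
      (auto simp: incseq_def le_fun_def intro!: ennreal_leI)
  finally show ?thesis .
qed

lemma nn_trunc2:
  assumes "P \<in> borel_measurable M" "\<And>w. 0 \<le> P w" "Y \<in> borel_measurable M" "\<And>w. 0 \<le> Y w"
  shows "(\<integral>\<^sup>+ w. ennreal (P w * Y w) \<partial>M) = (SUP n. \<integral>\<^sup>+ w. ennreal (min (real n) (P w) * min (real n) (Y w)) \<partial>M)"
proof -
  have "(\<integral>\<^sup>+ w. ennreal (P w * Y w) \<partial>M) = (\<integral>\<^sup>+ w. (SUP n. ennreal (min (real n) (P w) * min (real n) (Y w))) \<partial>M)"
    using assms(2,4) by (simp add: SUP_min2)
  also have "\<dots> = (SUP n. \<integral>\<^sup>+ w. ennreal (min (real n) (P w) * min (real n) (Y w)) \<partial>M)"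
    using assms by (intro nn_integral_monotone_convergence_SUP)
      (auto simp: incseq_def le_fun_def intro!: ennreal_leI mult_mono)
  finally show ?thesis .
qed

lemma nn_bounded:
  assumes "F \<in> borel_measurable M" "\<And>w. 0 \<le> F w" "\<And>w. F w \<le> c"
  shows "(\<integral>\<^sup>+ w. ennreal (F w) \<partial>M) = ennreal (expectation F)" "integrable M F"
proof -
  show i: "integrable M F" using assms by (intro bnd_int[where c=c]) auto
  show "(\<integral>\<^sup>+ w. ennreal (F w) \<partial>M) = ennreal (expectation F)"
    using i assms(2) by (intro nn_integral_eq_integral) auto
qed

lemma prod_meas: "(\<forall>i<k. bdd_borel (B i)) \<Longrightarrow> (\<lambda>w. \<Prod>i<k. cnt Phi w (B i)) \<in> borel_measurable M"
  by (intro borel_measurable_prod) auto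

lemma prod_nn: "0 \<le> (\<Prod>i<k. cnt Phi w (B i))" by (intro prod_nonneg) (auto simp: cnt_nonneg)

lemma fm_eq: "(\<forall>i<k. bdd_borel (B i)) \<Longrightarrow>
   fact_moment M Phi k B = (\<integral>\<^sup>+ w. ennreal (\<Prod>i<k. cnt Phi w (B i)) \<partial>M)"
  unfolding fact_moment_def
  by (intro nn_integral_cong) (auto simp: em_cnt cnt_nonneg prod_ennreal)

lemma NA_pair:
  assumes na: "neg_associated M Phi" and B: "\<forall>i<Suc k. bdd_borel (B i)"
    and dis: "disjoint_family_on B {..<Suc k}"
  shows "(\<integral>\<^sup>+ w. ennreal ((\<Prod>i<k. cnt Phi w (B i)) * cnt Phi w (B k)) \<partial>M)
     \<le> (\<integral>\<^sup>+ w. ennreal (\<Prod>i<k. cnt Phi w (B i)) \<partial>M) * (\<integral>\<^sup>+ w. ennreal (cnt Phi w (B k)) \<partial>M)"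
    (is "?L \<le> ?R")
proof -
  define P where "P w = (\<Prod>i<k. cnt Phi w (B i))" for w
  define Y where "Y w = cnt Phi w (B k)" for w
  have Pm: "P \<in> borel_measurable M" unfolding P_def using B by (intro prod_meas) auto
  have Ym: "Y \<in> borel_measurable M" unfolding Y_def using B by auto
  have P0: "0 \<le> P w" for w unfolding P_def by (rule prod_nn)
  have Y0: "0 \<le> Y w" for w unfolding Y_def by (rule cnt_nonneg)
  have step: "(\<integral>\<^sup>+ w. ennreal (min (real n) (P w) * min (real n) (Y w)) \<partial>M) \<le> ?R" for n
  proof -
    define Pn where "Pn w = min (real n) (P w)" for w
    define Yn where "Yn w = min (real n) (Y w)" for w
    have Pnm: "Pn \<in> borel_measurable M" unfolding Pn_def using Pm by measurable
    have Ynm: "Yn \<in> borel_measurable M" unfolding Yn_def using Ym by measurable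
    have PYm: "(\<lambda>w. Pn w * Yn w) \<in> borel_measurable M" using Pnm Ynm by measurable
    have Pn: "0 \<le> Pn w" "Pn w \<le> real n" for w unfolding Pn_def using P0 by auto
    have Yn: "0 \<le> Yn w" "Yn w \<le> real n" for w unfolding Yn_def using Y0 by auto
    have PYn: "0 \<le> Pn w * Yn w" "Pn w * Yn w \<le> real n * real n" for w
      using Pn Yn by (auto intro: mult_mono)
    note eP = nn_bounded[OF Pnm Pn]
    note eY = nn_bounded[OF Ynm Yn]
    note ePY = nn_bounded[OF PYm PYn]
    define f where "f x = min (real n) (\<Prod>i<k. max 0 (x i))" for x :: "nat \<Rightarrow> real"
    define g where "g x = min (real n) (max 0 (x (0::nat)))" for x :: "nat \<Rightarrow> real"
    define C where "C = (\<lambda>_::nat. B k)"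
    have fP: "f (cnt_vec Phi w k B) = Pn w" for w
      unfolding f_def Pn_def P_def cnt_vec_def by (simp add: cnt_nonneg)
    have gY: "g (cnt_vec Phi w 1 C) = Yn w" for w
      unfolding g_def Yn_def Y_def C_def cnt_vec_def by (simp add: cnt_nonneg)
    have h1: "\<forall>i<k. bdd_borel (B i)" using B by simp
    have h2: "\<forall>j<1. bdd_borel (C j)" using B unfolding C_def by simp
    have dm: "B i \<inter> B k = {}" if "i < k" for i
      using dis that unfolding disjoint_family_on_def by (metis lessThan_iff less_SucI lessI less_irrefl)
    have h3: "(\<Union>i<k. B i) \<inter> (\<Union>j<1. C j) = {}" unfolding C_def using dm by blast
    have h4: "depends_on k f" unfolding depends_on_def f_def by auto
    have h5: "depends_on 1 g" unfolding depends_on_def g_def by auto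
    have h6: "incr_on k f"
    proof (unfold incr_on_def f_def, intro allI impI)
      fix x y :: "nat \<Rightarrow> real" assume "\<forall>i<k. x i \<le> y i"
      then have "(\<Prod>i<k. max 0 (x i)) \<le> (\<Prod>i<k. max 0 (y i))" by (intro prod_mono) auto
      then show "min (real n) (\<Prod>i<k. max 0 (x i)) \<le> min (real n) (\<Prod>i<k. max 0 (y i))" by simp
    qed
    have h7: "incr_on 1 g" unfolding incr_on_def g_def by auto
    have h8: "integrable M (\<lambda>w. f (cnt_vec Phi w k B))" unfolding fP using eP(2) .
    have h9: "integrable M (\<lambda>w. g (cnt_vec Phi w 1 C))" unfolding gY using eY(2) .
    have h10: "integrable M (\<lambda>w. f (cnt_vec Phi w k B) * g (cnt_vec Phi w 1 C))" unfolding fP gY using ePY(2) .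
    have "cov M (\<lambda>w. f (cnt_vec Phi w k B)) (\<lambda>w. g (cnt_vec Phi w 1 C)) \<le> 0"
      using na[unfolded neg_associated_def, rule_format, where k=k and m=1 and B=B and C=C and f=f and g=g]
        h1 h2 h3 h4 h5 h6 h7 h8 h9 h10 by blast
    then have c: "expectation (\<lambda>w. Pn w * Yn w) \<le> expectation Pn * expectation Yn"
      unfolding fP gY cov_def by simp
    have "(\<integral>\<^sup>+ w. ennreal (Pn w * Yn w) \<partial>M) = ennreal (expectation (\<lambda>w. Pn w * Yn w))" by (rule ePY(1))
    also have "\<dots> \<le> ennreal (expectation Pn * expectation Yn)" using c by (rule ennreal_leI)
    also have "\<dots> = ennreal (expectation Pn) * ennreal (expectation Yn)"
      using Pn Yn by (intro ennreal_mult integral_nonneg_AE) auto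
    also have "\<dots> = (\<integral>\<^sup>+ w. ennreal (Pn w) \<partial>M) * (\<integral>\<^sup>+ w. ennreal (Yn w) \<partial>M)" using eP(1) eY(1) by simp
    also have "\<dots> \<le> ?R" unfolding P_def[symmetric] Y_def[symmetric]
      by (intro mult_mono nn_integral_mono ennreal_leI) (auto simp: Pn_def Yn_def)
    finally show ?thesis unfolding Pn_def Yn_def .
  qed
  have "?L = (\<integral>\<^sup>+ w. ennreal (P w * Y w) \<partial>M)" unfolding P_def Y_def ..
  also have "\<dots> = (SUP n. \<integral>\<^sup>+ w. ennreal (min (real n) (P w) * min (real n) (Y w)) \<partial>M)"
    by (rule nn_trunc2[OF Pm P0 Ym Y0])
  also have "\<dots> \<le> ?R" using step by (intro SUP_least) auto
  finally show ?thesis .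
qed

lemma A_pair:
  assumes a: "associated M Phi" and B: "\<forall>i<Suc k. bdd_borel (B i)"
  shows "(\<integral>\<^sup>+ w. ennreal (\<Prod>i<k. cnt Phi w (B i)) \<partial>M) * (\<integral>\<^sup>+ w. ennreal (cnt Phi w (B k)) \<partial>M)
     \<le> (\<integral>\<^sup>+ w. ennreal ((\<Prod>i<k. cnt Phi w (B i)) * cnt Phi w (B k)) \<partial>M)"
    (is "?R \<le> ?L")
proof -
  define P where "P w = (\<Prod>i<k. cnt Phi w (B i))" for w
  define Y where "Y w = cnt Phi w (B k)" for w
  have Pm: "P \<in> borel_measurable M" unfolding P_def using B by (intro prod_meas) auto
  have Ym: "Y \<in> borel_measurable M" unfolding Y_def using B by auto
  have P0: "0 \<le> P w" for w unfolding P_def by (rule prod_nn)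
  have Y0: "0 \<le> Y w" for w unfolding Y_def by (rule cnt_nonneg)
  have step: "(\<integral>\<^sup>+ w. ennreal (min (real n) (P w)) \<partial>M) * (\<integral>\<^sup>+ w. ennreal (min (real n) (Y w)) \<partial>M) \<le> ?L" for n
  proof (cases "n = 0")
    case True
    then show ?thesis using P0 by simp
  next
    case False
    define Pn where "Pn w = min (real n) (P w)" for w
    define Yn where "Yn w = min (real n) (Y w)" for w
    have Pnm: "Pn \<in> borel_measurable M" unfolding Pn_def using Pm by measurable
    have Ynm: "Yn \<in> borel_measurable M" unfolding Yn_def using Ym by measurable
    have PYm: "(\<lambda>w. Pn w * Yn w) \<in> borel_measurable M" using Pnm Ynm by measurable
    have Pn: "0 \<le> Pn w" "Pn w \<le> real n" for w unfolding Pn_def using P0 by auto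
    have Yn: "0 \<le> Yn w" "Yn w \<le> real n" for w unfolding Yn_def using Y0 by auto
    have PYn: "0 \<le> Pn w * Yn w" "Pn w * Yn w \<le> real n * real n" for w
      using Pn Yn by (auto intro: mult_mono)
    note eP = nn_bounded[OF Pnm Pn]
    note eY = nn_bounded[OF Ynm Yn]
    note ePY = nn_bounded[OF PYm PYn]
    define c where "c = inverse (real n)"
    define f where "f x = min (real n) (\<Prod>i<k. max 0 (x i)) * c" for x :: "nat \<Rightarrow> real"
    define g where "g x = min (real n) (max 0 (x k)) * c" for x :: "nat \<Rightarrow> real"
    have fP: "f (cnt_vec Phi w (Suc k) B) = Pn w * c" for w
      unfolding f_def Pn_def P_def cnt_vec_def by (simp add: cnt_nonneg)
    have gY: "g (cnt_vec Phi w (Suc k) B) = Yn w * c" for w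
      unfolding g_def Yn_def Y_def cnt_vec_def by (simp add: cnt_nonneg)
    have h4: "depends_on (Suc k) f" unfolding depends_on_def f_def by auto
    have h5: "depends_on (Suc k) g" unfolding depends_on_def g_def by auto
    have c0: "0 \<le> c" unfolding c_def by simp
    have h6: "incr_on (Suc k) f"
    proof (unfold incr_on_def f_def, intro allI impI)
      fix x y :: "nat \<Rightarrow> real" assume "\<forall>i<Suc k. x i \<le> y i"
      then have "\<forall>i<k. x i \<le> y i" by auto
      then have "(\<Prod>i<k. max 0 (x i)) \<le> (\<Prod>i<k. max 0 (y i))" by (intro prod_mono) auto
      then show "min (real n) (\<Prod>i<k. max 0 (x i)) * c \<le> min (real n) (\<Prod>i<k. max 0 (y i)) * c"
        using c0 by (intro mult_right_mono) auto
    qed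
    have h7: "incr_on (Suc k) g" unfolding incr_on_def g_def using c0 by (auto intro!: mult_right_mono)
    have cc': "\<And>j. continuous_on UNIV (\<lambda>x::nat\<Rightarrow>real. x j)" by simp
    have h8: "continuous_on UNIV f" unfolding f_def by (intro continuous_intros cc')
    have h9: "continuous_on UNIV g" unfolding g_def by (intro continuous_intros cc')
    have h10: "\<forall>x. 0 \<le> f x \<and> f x \<le> 1" unfolding f_def c_def
      by (intro allI min_inv_01 prod_nonneg) auto
    have h11: "\<forall>x. 0 \<le> g x \<and> g x \<le> 1" unfolding g_def c_def
      by (intro allI min_inv_01) auto
    have "cov M (\<lambda>w. f (cnt_vec Phi w (Suc k) B)) (\<lambda>w. g (cnt_vec Phi w (Suc k) B)) \<ge> 0"
      using a[unfolded associated_def, rule_format, where k="Suc k" and B=B and f=f and g=g]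
        B h4 h5 h6 h7 h8 h9 h10 h11 by blast
    then have "cov M Pn Yn * (c * c) \<ge> 0" unfolding fP gY cov_scale .
    moreover have "0 < c * c" unfolding c_def using False by simp
    ultimately have "cov M Pn Yn \<ge> 0" by (simp add: zero_le_mult_iff)
    then have cv: "expectation Pn * expectation Yn \<le> expectation (\<lambda>w. Pn w * Yn w)"
      unfolding cov_def by simp
    have "(\<integral>\<^sup>+ w. ennreal (Pn w) \<partial>M) * (\<integral>\<^sup>+ w. ennreal (Yn w) \<partial>M)
         = ennreal (expectation Pn) * ennreal (expectation Yn)" using eP(1) eY(1) by simp
    also have "\<dots> = ennreal (expectation Pn * expectation Yn)"
      using Pn Yn by (intro ennreal_mult[symmetric] integral_nonneg_AE) auto
    also have "\<dots> \<le> ennreal (expectation (\<lambda>w. Pn w * Yn w))" using cv by (rule ennreal_leI)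
    also have "\<dots> = (\<integral>\<^sup>+ w. ennreal (Pn w * Yn w) \<partial>M)" by (rule ePY(1)[symmetric])
    also have "\<dots> \<le> ?L" unfolding P_def[symmetric] Y_def[symmetric]
      using P0 Y0 by (intro nn_integral_mono ennreal_leI mult_mono) (auto simp: Pn_def Yn_def)
    finally show ?thesis unfolding Pn_def Yn_def .
  qed
  have "?R = (SUP n. \<integral>\<^sup>+ w. ennreal (min (real n) (P w)) \<partial>M) * (SUP n. \<integral>\<^sup>+ w. ennreal (min (real n) (Y w)) \<partial>M)"
    unfolding P_def[symmetric] Y_def[symmetric] using nn_trunc[OF Pm P0] nn_trunc[OF Ym Y0] by simp
  also have "\<dots> \<le> ?L"
    using P0 Y0 step
    by (intro SUP_prod_le) (auto simp: incseq_def intro!: nn_integral_mono ennreal_leI)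
  finally show ?thesis .
qed

lemma alpha_sub:
  assumes na: "neg_associated M Phi"
  shows "alpha_weakly_sub M Phi"
  unfolding alpha_weakly_sub_def
proof (intro allI impI)
  fix k :: nat and B :: "nat \<Rightarrow> 'a set"
  assume "(\<forall>i<k. bdd_borel (B i)) \<and> disjoint_family_on B {..<k}"
  then have B: "\<forall>i<k. bdd_borel (B i)" and dis: "disjoint_family_on B {..<k}" by auto
  have "(\<integral>\<^sup>+ w. ennreal (\<Prod>i<k'. cnt Phi w (B i)) \<partial>M) \<le> (\<Prod>i<k'. \<integral>\<^sup>+ w. ennreal (cnt Phi w (B i)) \<partial>M)"
    if "k' \<le> k" for k'
    using that
  proof (induction k')
    case 0
    then show ?case by (simp add: emeasure_space_1)
  next
    case (Suc k')
    have B': "\<forall>i<Suc k'. bdd_borel (B i)" using B Suc.prems by auto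
    have dis': "disjoint_family_on B {..<Suc k'}"
      by (rule disjoint_family_on_mono[OF _ dis]) (use Suc.prems in auto)
    have "(\<integral>\<^sup>+ w. ennreal (\<Prod>i<Suc k'. cnt Phi w (B i)) \<partial>M)
        = (\<integral>\<^sup>+ w. ennreal ((\<Prod>i<k'. cnt Phi w (B i)) * cnt Phi w (B k')) \<partial>M)" by simp
    also have "\<dots> \<le> (\<integral>\<^sup>+ w. ennreal (\<Prod>i<k'. cnt Phi w (B i)) \<partial>M) * (\<integral>\<^sup>+ w. ennreal (cnt Phi w (B k')) \<partial>M)"
      by (rule NA_pair[OF na B' dis'])
    also have "\<dots> \<le> (\<Prod>i<k'. \<integral>\<^sup>+ w. ennreal (cnt Phi w (B i)) \<partial>M) * (\<integral>\<^sup>+ w. ennreal (cnt Phi w (B k')) \<partial>M)"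
      using Suc by (intro mult_right_mono) auto
    finally show ?case by simp
  qed
  then have "(\<integral>\<^sup>+ w. ennreal (\<Prod>i<k. cnt Phi w (B i)) \<partial>M) \<le> (\<Prod>i<k. \<integral>\<^sup>+ w. ennreal (cnt Phi w (B i)) \<partial>M)"
    by simp
  moreover have "(\<Prod>i<k. mean_measure M Phi (B i)) = (\<Prod>i<k. \<integral>\<^sup>+ w. ennreal (cnt Phi w (B i)) \<partial>M)"
    using B by (intro prod.cong) (auto simp: mean_nn)
  ultimately show "fact_moment M Phi k B \<le> (\<Prod>i<k. mean_measure M Phi (B i))"
    using fm_eq[OF B] by simp
qed

lemma alpha_super:
  assumes a: "associated M Phi"
  shows "alpha_weakly_super M Phi"
  unfolding alpha_weakly_super_def
proof (intro allI impI)
  fix k :: nat and B :: "nat \<Rightarrow> 'a set"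
  assume "(\<forall>i<k. bdd_borel (B i)) \<and> disjoint_family_on B {..<k}"
  then have B: "\<forall>i<k. bdd_borel (B i)" by auto
  have "(\<Prod>i<k'. \<integral>\<^sup>+ w. ennreal (cnt Phi w (B i)) \<partial>M) \<le> (\<integral>\<^sup>+ w. ennreal (\<Prod>i<k'. cnt Phi w (B i)) \<partial>M)"
    if "k' \<le> k" for k'
    using that
  proof (induction k')
    case 0
    then show ?case by (simp add: emeasure_space_1)
  next
    case (Suc k')
    have B': "\<forall>i<Suc k'. bdd_borel (B i)" using B Suc.prems by auto
    have "(\<Prod>i<Suc k'. \<integral>\<^sup>+ w. ennreal (cnt Phi w (B i)) \<partial>M)
       = (\<Prod>i<k'. \<integral>\<^sup>+ w. ennreal (cnt Phi w (B i)) \<partial>M) * (\<integral>\<^sup>+ w. ennreal (cnt Phi w (B k')) \<partial>M)" by simp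
    also have "\<dots> \<le> (\<integral>\<^sup>+ w. ennreal (\<Prod>i<k'. cnt Phi w (B i)) \<partial>M) * (\<integral>\<^sup>+ w. ennreal (cnt Phi w (B k')) \<partial>M)"
      using Suc by (intro mult_right_mono) auto
    also have "\<dots> \<le> (\<integral>\<^sup>+ w. ennreal ((\<Prod>i<k'. cnt Phi w (B i)) * cnt Phi w (B k')) \<partial>M)"
      by (rule A_pair[OF a B'])
    finally show ?case by simp
  qed
  then have "(\<Prod>i<k. \<integral>\<^sup>+ w. ennreal (cnt Phi w (B i)) \<partial>M) \<le> (\<integral>\<^sup>+ w. ennreal (\<Prod>i<k. cnt Phi w (B i)) \<partial>M)"
    by simp
  moreover have "(\<Prod>i<k. mean_measure M Phi (B i)) = (\<Prod>i<k. \<integral>\<^sup>+ w. ennreal (cnt Phi w (B i)) \<partial>M)"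
    using B by (intro prod.cong) (auto simp: mean_nn)
  ultimately show "fact_moment M Phi k B \<ge> (\<Prod>i<k. mean_measure M Phi (B i))"
    using fm_eq[OF B] by simp
qed

end

theorem corollary3p2:
  fixes M :: "'w measure" and Phi :: "'w \<Rightarrow> 'a::euclidean_space measure"
  assumes "point_process M Phi"
  shows "(neg_associated M Phi \<and> simple_pp M Phi \<and> radon_mean M Phi \<longrightarrow> weakly_sub_poisson M Phi)
       \<and> (associated M Phi \<and> radon_mean M Phi \<and> diffuse_mean M Phi \<longrightarrow> weakly_super_poisson M Phi)"
proof -
  interpret ppl M Phi using assms by unfold_locales
  show ?thesis
    unfolding weakly_sub_poisson_def weakly_super_poisson_def
    using nu_sub alpha_sub nu_super alpha_super by blast
qed


end
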